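(* For every integer $n$ with $|n|\ge 400$, \[ C_n<265.55\,\log|n|\,(\log\log|n|)^2+9.01\,\log\log|n|. \] That is, if $S$ is any set of positive integers with the property $D(n)$, then the number of elements $x\in S$ with $1\le x\le n^2$ is less than the right-hand side.
   Context: Let $n$ be a nonzero integer. A set of positive integers $S$ has the property $D(n)$ if $xy+n$ is a perfect square for all distinct $x,y\in S$. Define $C_n=\sup\{|S\cap[1,n^2]| : S \text{ has the property } D(n)\}$. Here $\log$ is the natural logarithm. *)

theory Defs
  imports Complex_Main
begin

definition has_property_D :: "int \<Rightarrow> int set \<Rightarrow> bool" where
  "has_property_D n S \<longleftrightarrow> (\<forall>x\<in>S. x > 0) \<and>
     (\<forall>x\<in>S. \<forall>y\<in>S. x \<noteq> y \<longrightarrow> (\<exists>k::int. x * y + n = k\<^sup>2))"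

text \<open>C_n = sup of |S \<inter> [1, n^2]| over sets S with property D(n).
  These cardinalities are bounded by n^2, so the supremum over nat is well behaved.\<close>
definition C :: "int \<Rightarrow> nat" where
  "C n = Sup {card (S \<inter> {1..n\<^sup>2}) | S. has_property_D n S}"

end

theory Submission
  imports Defs "HOL-Number_Theory.Number_Theory"
begin


lemma leg_mod: "Legendre (a mod p) p = Legendre a p"
  unfolding Legendre_def QuadRes_def cong_def by simp

lemma leg_cong: "[x = y] (mod p) \<Longrightarrow> Legendre x p = Legendre y p"
  by (metis cong_def leg_mod)

lemma leg_range: "Legendre a p \<in> {-1,0,1}"
  unfolding Legendre_def by auto

lemma leg_zero_iff: "Legendre a p = 0 \<longleftrightarrow> p dvd a"
  unfolding Legendre_def by (auto simp: cong_0_iff)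

lemma leg_QR: "QuadRes p a \<Longrightarrow> Legendre a p \<ge> 0"
  unfolding Legendre_def by auto

lemma leg_QR_nz: "QuadRes p a \<Longrightarrow> \<not> p dvd a \<Longrightarrow> Legendre a p = 1"
  unfolding Legendre_def by (auto simp: cong_0_iff)

lemma prime_nat_of_int: fixes p :: int assumes p: "prime p" "p > 2" shows "prime (nat p)"
  using p prime_int_nat_transfer[of "nat p"] by simp

lemma euler_int: fixes p :: int assumes p: "prime p" "p > 2"
  shows "[Legendre x p = x ^ ((nat p - 1) div 2)] (mod p)"
proof -
  have "2 < nat p" using p by simp
  from euler_criterion[OF prime_nat_of_int[OF p] this, of x] show ?thesis using p by simp
qed

lemma leg_mult:
  fixes p :: int
  assumes p: "prime p" "p > 2"
  shows "Legendre (a*b) p = Legendre a p * Legendre b p"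
proof -
  define e where "e = (nat p - 1) div 2"
  have c1: "[Legendre (a*b) p = (a*b) ^ e] (mod p)"
    unfolding e_def by (rule euler_int[OF p])
  have c2: "[a ^ e * b ^ e = Legendre a p * Legendre b p] (mod p)"
    unfolding e_def by (rule cong_mult[OF cong_sym[OF euler_int[OF p]] cong_sym[OF euler_int[OF p]]])
  have "[Legendre (a*b) p = Legendre a p * Legendre b p] (mod p)"
    using cong_trans[OF c1 c2[unfolded power_mult_distrib[symmetric]]] .
  hence d: "p dvd (Legendre (a*b) p - Legendre a p * Legendre b p)"
    by (simp add: cong_iff_dvd_diff)
  have r: "\<bar>Legendre (a*b) p - Legendre a p * Legendre b p\<bar> \<le> 2"
    using leg_range[of "a*b" p] leg_range[of a p] leg_range[of b p] by auto
  show ?thesis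
  proof (rule ccontr)
    assume "\<not> ?thesis"
    hence "Legendre (a*b) p - Legendre a p * Legendre b p \<noteq> 0" by simp
    from dvd_imp_le_int[OF this d] have "p \<le> \<bar>Legendre (a*b) p - Legendre a p * Legendre b p\<bar>"
      using p by simp
    with r p(2) show False by simp
  qed
qed

lemma leg_sq_unit:
  fixes p :: int
  assumes p: "prime p" "p > 2" and "\<not> p dvd y"
  shows "Legendre y p * Legendre y p = 1"
  using leg_range[of y p] leg_zero_iff[of y p] assms(3) by auto

lemma leg_sq_mult:
  fixes p :: int
  assumes p: "prime p" "p > 2" and "\<not> p dvd y"
  shows "Legendre (y*y*a) p = Legendre a p"
  using leg_mult[OF p] leg_sq_unit[OF assms] by simp



lemma reindex_endo:
  assumes "finite I" "g ` I \<subseteq> I" "inj_on g I"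
  shows "(\<Sum>x\<in>I. f (g x)) = (\<Sum>x\<in>I. f x)"
proof -
  have "g ` I = I" using endo_inj_surj[OF assms] .
  then show ?thesis using sum.reindex[OF assms(3), of f] by simp
qed

lemma range_dvd_eq:
  fixes p x y :: int
  assumes "x \<in> {0..<p}" "y \<in> {0..<p}" "p dvd (x - y)"
  shows "x = y"
proof -
  have "x mod p = y mod p" using assms(3) by (simp add: mod_eq_dvd_iff)
  moreover have "x mod p = x" "y mod p = y" using assms(1,2) by auto
  ultimately show ?thesis by simp
qed

lemma affine_sum:
  fixes p a c :: int
  assumes p: "prime p" and a: "\<not> p dvd a"
  shows "(\<Sum>x\<in>{0..<p}. f ((a*x+c) mod p)) = (\<Sum>x\<in>{0..<p}. f x)"
proof (rule reindex_endo)
  have pp: "p > 0" using p prime_gt_0_int by blast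
  show "(\<lambda>x. (a*x+c) mod p) ` {0..<p} \<subseteq> {0..<p}" using pp by auto
  show "inj_on (\<lambda>x. (a*x+c) mod p) {0..<p}"
  proof (rule inj_onI)
    fix x y assume xy: "x \<in> {0..<p}" "y \<in> {0..<p}" "(a*x+c) mod p = (a*y+c) mod p"
    hence "p dvd (a*x+c) - (a*y+c)" by (simp add: mod_eq_dvd_iff)
    moreover have "(a*x+c) - (a*y+c) = a * (x - y)" by (simp add: algebra_simps)
    ultimately have "p dvd a * (x - y)" by simp
    hence "p dvd (x - y)" using a p by (simp add: prime_dvd_mult_iff)
    thus "x = y" using range_dvd_eq xy by blast
  qed
qed simp

context
  fixes p :: int
  assumes p: "prime p" "p > 2"
begin

lemma pgt0: "p > 0" using p by simp

lemma leg_affine_sum: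
  assumes a: "\<not> p dvd a"
  shows "(\<Sum>x\<in>{0..<p}. Legendre (a*x+c) p) = (\<Sum>x\<in>{0..<p}. Legendre x p)"
proof -
  have "(\<Sum>x\<in>{0..<p}. Legendre (a*x+c) p) = (\<Sum>x\<in>{0..<p}. Legendre ((a*x+c) mod p) p)"
    by (simp add: leg_mod)
  also have "\<dots> = (\<Sum>x\<in>{0..<p}. Legendre x p)"
    by (rule affine_sum[OF p(1) a])
  finally show ?thesis .
qed

lemma nonres: "\<exists>e. Legendre e p = -1"
proof (rule ccontr)
  assume "\<not> ?thesis"
  hence nl: "Legendre e p \<noteq> -1" for e by blast
  define h where "h = (p - 1) div 2"
  have sub: "{1..<p} \<subseteq> (\<lambda>y. (y*y) mod p) ` {1..h}"
  proof
    fix e assume e: "e \<in> {1..<p}"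
    hence nd: "\<not> p dvd e" using zdvd_not_zless by auto
    have "QuadRes p e" using nl[of e] nd unfolding Legendre_def by (auto simp: cong_0_iff split: if_splits)
    then obtain y where y: "[y^2 = e] (mod p)" unfolding QuadRes_def by blast
    define z where "z = y mod p"
    have zr: "z \<in> {0..<p}" using pgt0 by (simp add: z_def)
    have zz: "(z*z) mod p = e"
    proof -
      have "(z*z) mod p = (y*y) mod p" by (simp add: z_def mod_simps)
      also have "\<dots> = e mod p" using y by (simp add: cong_def power2_eq_square)
      also have "\<dots> = e" using e by simp
      finally show ?thesis .
    qed
    have z0: "z \<noteq> 0" using zz e by auto
    show "e \<in> (\<lambda>y. (y*y) mod p) ` {1..h}"
    proof (cases "z \<le> h")
      case True
      then show ?thesis using z0 zr zz by (auto intro!: image_eqI[of _ _ z])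
    next
      case False
      have sq: "((p - z)*(p - z)) mod p = (z*z) mod p"
      proof -
        have "(p - z)*(p - z) = z*z + p*(p - 2*z)" by (simp add: algebra_simps)
        thus ?thesis by simp
      qed
      have "odd p" using p prime_odd_int by blast
      moreover have "p - z \<in> {1..h}" using False zr h_def \<open>odd p\<close> by auto presburger
      ultimately show ?thesis using zz sq by (intro image_eqI[of _ _ "p - z"]) auto
    qed
  qed
  have "card {1..<p} \<le> card ((\<lambda>y. (y*y) mod p) ` {1..h})"
    by (rule card_mono[OF _ sub]) simp
  also have "\<dots> \<le> card {1..h}" by (rule card_image_le) simp
  finally have "nat (p - 1) \<le> nat h" by simp
  thus False using p(2) h_def by simp
qed

lemma leg_sum_zero: "(\<Sum>x\<in>{0..<p}. Legendre x p) = 0"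
proof -
  obtain e where e: "Legendre e p = -1" using nonres by blast
  hence nd: "\<not> p dvd e" using leg_zero_iff[of e p] by auto
  have "(\<Sum>x\<in>{0..<p}. Legendre x p) = (\<Sum>x\<in>{0..<p}. Legendre (e*x+0) p)"
    using leg_affine_sum[OF nd, of 0] by simp
  also have "\<dots> = (\<Sum>x\<in>{0..<p}. - Legendre x p)"
    by (simp add: leg_mult[OF p] e)
  also have "\<dots> = - (\<Sum>x\<in>{0..<p}. Legendre x p)" by (simp add: sum_negf)
  finally show ?thesis by simp
qed

lemma leg_affine_sum0:
  assumes a: "\<not> p dvd a"
  shows "(\<Sum>x\<in>{0..<p}. Legendre (a*x+c) p) = 0"
  using leg_affine_sum[OF a] leg_sum_zero by simp

definition minv :: "int \<Rightarrow> int" where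
  "minv z = (SOME w. w \<in> {1..<p} \<and> [z*w = 1] (mod p))"

lemma minv_ok:
  assumes "\<not> p dvd z"
  shows "minv z \<in> {1..<p} \<and> [z * minv z = 1] (mod p)"
proof -
  have "coprime p z" using p(1) assms by (simp add: prime_imp_coprime)
  hence "coprime z p" by (simp add: ac_simps)
  then obtain x where x: "[z*x = 1] (mod p)" using cong_solve_coprime_int by blast
  define w where "w = x mod p"
  have w: "[z*w = 1] (mod p)"
  proof -
    have "[z*w = z*x] (mod p)" unfolding w_def cong_def by (simp add: mod_simps)
    thus ?thesis using x cong_trans by blast
  qed
  have "w \<noteq> 0"
  proof
    assume "w = 0"
    with w have "[0 = 1] (mod p)" by simp
    hence "(1::int) mod p = 0" by (simp add: cong_def)
    moreover have "(1::int) mod p = 1" using p(2) by simp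
    ultimately show False by simp
  qed
  moreover have "0 \<le> w" "w < p" using pgt0 unfolding w_def by auto
  ultimately have "w \<in> {1..<p}" by auto
  hence "\<exists>w. w \<in> {1..<p} \<and> [z*w = 1] (mod p)" using w by blast
  thus ?thesis unfolding minv_def by (rule someI_ex)
qed

lemma range1_nd: "z \<in> {1..<p} \<Longrightarrow> \<not> p dvd z"
  using zdvd_not_zless by auto

lemma minv_sum:
  "(\<Sum>z\<in>{1..<p}. f (minv z)) = (\<Sum>z\<in>{1..<p}. f z)"
proof (rule reindex_endo)
  show "minv ` {1..<p} \<subseteq> {1..<p}" using minv_ok range1_nd by blast
  show "inj_on minv {1..<p}"
  proof (rule inj_onI)
    fix x y assume xy: "x \<in> {1..<p}" "y \<in> {1..<p}" "minv x = minv y"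
    have a: "p dvd 1 - x * minv x" using minv_ok[OF range1_nd[OF xy(1)]]
      by (metis cong_iff_dvd_diff cong_sym)
    have b: "p dvd 1 - y * minv y" using minv_ok[OF range1_nd[OF xy(2)]]
      by (metis cong_iff_dvd_diff cong_sym)
    have "x - y = x * (1 - y * minv y) - y * (1 - x * minv x)" using xy(3) by (simp add: algebra_simps)
    hence "p dvd x - y" using a b by (metis dvd_diff dvd_mult)
    thus "x = y" using range_dvd_eq xy by auto
  qed
qed simp


lemma Fsum_bound:
  fixes b b' n :: int
  assumes b: "b \<in> {0..<p}" and b': "b' \<in> {0..<p}" and bb: "b \<noteq> b'" and n: "\<not> p dvd n"
  shows "\<bar>\<Sum>a\<in>{0..<p}. Legendre (a*b+n) p * Legendre (a*b'+n) p\<bar> \<le> 1"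
proof -
  have gen: "\<bar>\<Sum>a\<in>{0..<p}. Legendre (a*b+n) p * Legendre (a*b'+n) p\<bar> \<le> 1"
    if b: "b \<in> {1..<p}" and b': "b' \<in> {0..<p}" and bb: "b \<noteq> b'" for b b'
  proof (cases "b' = 0")
    case True
    have "(\<Sum>a\<in>{0..<p}. Legendre (a*b+n) p * Legendre (a*b'+n) p)
        = Legendre n p * (\<Sum>a\<in>{0..<p}. Legendre (b*a+n) p)"
      using True by (simp add: sum_distrib_left algebra_simps)
    also have "\<dots> = 0" using leg_affine_sum0[OF range1_nd[OF b]] by simp
    finally show ?thesis by simp
  next
    case False
    hence b'1: "b' \<in> {1..<p}" using b' by auto
    define ib where "ib = minv b"
    have ib: "ib \<in> {1..<p}" "[b * ib = 1] (mod p)" using minv_ok[OF range1_nd[OF b]] ib_def by auto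
    have ib1: "p dvd ib * b - 1" using ib(2) by (simp add: cong_iff_dvd_diff cong_sym_eq mult.commute)
    define m where "m = n * (b - b')"
    have mnd: "\<not> p dvd m"
    proof
      assume "p dvd m"
      hence "p dvd b - b'" using n p(1) by (simp add: m_def prime_dvd_mult_iff)
      thus False using range_dvd_eq b b' bb by auto
    qed
    define G where "G = (\<lambda>a. Legendre (a*b+n) p * Legendre (a*b'+n) p)"
    have "(\<Sum>a\<in>{0..<p}. G a) = (\<Sum>z\<in>{0..<p}. G ((ib*z + (- ib*n)) mod p))"
      using affine_sum[OF p(1) range1_nd[OF ib(1)], of G "- ib*n"] by simp
    also have "\<dots> = (\<Sum>z\<in>{0..<p}. Legendre ib p * Legendre (z*(b'*z+m)) p)"
    proof (rule sum.cong[OF refl])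
      fix z
      define X where "X = ib*z + (- ib*n)"
      have hX: "p dvd X mod p - X"
      proof -
        have "X mod p - X = p * (- (X div p))" using div_mult_mod_eq[of X p] by (simp add: algebra_simps)
        thus ?thesis by simp
      qed
      have e1: "Legendre ((X mod p)*b + n) p = Legendre z p"
      proof (rule leg_cong)
        have "(X mod p)*b + n - z = (X mod p - X)*b + (ib*b - 1)*(z - n)"
          by (simp add: X_def algebra_simps)
        moreover have "p dvd (X mod p - X)*b + (ib*b - 1)*(z - n)"
          using ib1 hX by (intro dvd_add dvd_mult2)
        ultimately show "[(X mod p)*b + n = z] (mod p)" by (simp add: cong_iff_dvd_diff)
      qed
      have e2: "Legendre ((X mod p)*b' + n) p = Legendre (ib*(b'*z+m)) p"
      proof (rule leg_cong)
        have "(X mod p)*b' + n - ib*(b'*z+m) = (X mod p - X)*b' - n*(ib*b - 1)"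
          by (simp add: X_def m_def algebra_simps)
        moreover have "p dvd (X mod p - X)*b' - n*(ib*b - 1)"
          using dvd_diff[OF dvd_mult2[OF hX, of b'] dvd_mult[OF ib1, of n]] .
        ultimately show "[(X mod p)*b' + n = ib*(b'*z+m)] (mod p)" by (simp add: cong_iff_dvd_diff)
      qed
      show "G ((ib*z + (- ib*n)) mod p) = Legendre ib p * Legendre (z*(b'*z+m)) p"
        using e1 e2 unfolding G_def X_def[symmetric] by (simp add: leg_mult[OF p])
    qed
    also have "\<dots> = Legendre ib p * (\<Sum>z\<in>{0..<p}. Legendre (z*(b'*z+m)) p)"
      by (simp add: sum_distrib_left)
    also have "(\<Sum>z\<in>{0..<p}. Legendre (z*(b'*z+m)) p) = - Legendre b' p"
    proof -
      have split: "{0..<p} = insert 0 {1..<p}" using pgt0 by auto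
      have "(\<Sum>z\<in>{0..<p}. Legendre (z*(b'*z+m)) p) = (\<Sum>z\<in>{1..<p}. Legendre (z*(b'*z+m)) p)"
        unfolding split by (simp add: Legendre_def)
      also have "\<dots> = (\<Sum>z\<in>{1..<p}. Legendre (b' + m * minv z) p)"
      proof (rule sum.cong[OF refl])
        fix z assume z: "z \<in> {1..<p}"
        have mz: "p dvd 1 - z * minv z" using minv_ok[OF range1_nd[OF z]]
          by (metis cong_iff_dvd_diff cong_sym)
        have "Legendre (z*(b'*z+m)) p = Legendre (z*z*(b' + m * minv z)) p"
        proof (rule leg_cong)
          have "z*(b'*z+m) - z*z*(b' + m * minv z) = z*m*(1 - z * minv z)"
            by (simp add: algebra_simps)
          thus "[z*(b'*z+m) = z*z*(b' + m * minv z)] (mod p)"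
            using mz by (simp add: cong_iff_dvd_diff)
        qed
        also have "\<dots> = Legendre (b' + m * minv z) p" by (rule leg_sq_mult[OF p range1_nd[OF z]])
        finally show "Legendre (z*(b'*z+m)) p = Legendre (b' + m * minv z) p" .
      qed
      also have "\<dots> = (\<Sum>w\<in>{1..<p}. Legendre (b' + m * w) p)"
        by (rule minv_sum[where f = "\<lambda>w. Legendre (b' + m * w) p"])
      also have "\<dots> = (\<Sum>w\<in>{0..<p}. Legendre (m * w + b') p) - Legendre b' p"
        unfolding split by (simp add: algebra_simps)
      also have "\<dots> = - Legendre b' p" using leg_affine_sum0[OF mnd] by simp
      finally show ?thesis .
    qed
    finally have "(\<Sum>a\<in>{0..<p}. G a) = - (Legendre ib p * Legendre b' p)" by simp
    moreover have "\<bar>Legendre ib p * Legendre b' p\<bar> \<le> 1"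
      using leg_range[of ib p] leg_range[of b' p] by auto
    ultimately show ?thesis unfolding G_def by simp
  qed
  show ?thesis
  proof (cases "b = 0")
    case True
    hence "b' \<in> {1..<p}" using b' bb by auto
    from gen[OF this b] True bb show ?thesis by (simp add: mult.commute)
  next
    case False
    hence "b \<in> {1..<p}" using b by auto
    from gen[OF this b' bb] show ?thesis .
  qed
qed


lemma local_bound:
  fixes A :: "int set" and n :: int
  assumes A: "A \<subseteq> {0..<p}" and n: "\<not> p dvd n"
    and QR: "\<And>a b. a \<in> A \<Longrightarrow> b \<in> A \<Longrightarrow> a \<noteq> b \<Longrightarrow> QuadRes p (a*b+n)"
  shows "real (card A) \<le> sqrt (real_of_int p) + 5"
proof -
  have fin: "finite A" using A finite_subset by blast
  define k where "k = card A"
  define X where "X = (\<lambda>a. \<Sum>b\<in>A. Legendre (a*b+n) p)"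
  define F where "F = (\<lambda>b b'. \<Sum>a\<in>{0..<p}. Legendre (a*b+n) p * Legendre (a*b'+n) p)"
  have S2: "(\<Sum>a\<in>{0..<p}. (X a)^2) = (\<Sum>b\<in>A. \<Sum>b'\<in>A. F b b')"
  proof -
    have "(\<Sum>a\<in>{0..<p}. (X a)^2) = (\<Sum>a\<in>{0..<p}. \<Sum>b\<in>A. \<Sum>b'\<in>A. Legendre (a*b+n) p * Legendre (a*b'+n) p)"
      unfolding X_def power2_eq_square by (simp add: sum_product)
    also have "\<dots> = (\<Sum>b\<in>A. \<Sum>a\<in>{0..<p}. \<Sum>b'\<in>A. Legendre (a*b+n) p * Legendre (a*b'+n) p)"
      by (rule sum.swap)
    also have "\<dots> = (\<Sum>b\<in>A. \<Sum>b'\<in>A. F b b')"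
      unfolding F_def by (rule sum.cong[OF refl], rule sum.swap)
    finally show ?thesis .
  qed
  have Fd: "F b b \<le> p" for b
  proof -
    have "F b b \<le> (\<Sum>a\<in>{0..<p}. 1)" unfolding F_def
    proof (rule sum_mono)
      fix a show "Legendre (a*b+n) p * Legendre (a*b+n) p \<le> 1"
        using leg_range[of "a*b+n" p] by auto
    qed
    thus ?thesis using pgt0 by simp
  qed
  have Fo: "F b b' \<le> 1" if "b \<in> A" "b' \<in> A" "b \<noteq> b'" for b b'
  proof -
    have "b \<in> {0..<p}" "b' \<in> {0..<p}" using that A by auto
    from Fsum_bound[OF this that(3) n] show ?thesis unfolding F_def by linarith
  qed
  have row: "(\<Sum>b'\<in>A. F b b') \<le> p + (int k - 1)" if b: "b \<in> A" for b
  proof -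
    have "(\<Sum>b'\<in>A. F b b') = F b b + (\<Sum>b'\<in>A - {b}. F b b')"
      using sum.remove[OF fin b] by simp
    also have "(\<Sum>b'\<in>A - {b}. F b b') \<le> (\<Sum>b'\<in>A - {b}. 1)"
      by (rule sum_mono) (use Fo b in auto)
    also have "(\<Sum>b'\<in>A - {b}. (1::int)) = int k - 1"
    proof -
      have "card A > 0" using b fin by (simp add: card_gt_0_iff; blast)
      hence "k \<ge> 1" unfolding k_def by simp
      moreover have "card (A - {b}) = k - 1" unfolding k_def by (rule card_Diff_singleton[OF b])
      ultimately show ?thesis by simp
    qed
    finally show ?thesis using Fd[of b] by simp
  qed
  have upper: "(\<Sum>a\<in>{0..<p}. (X a)^2) \<le> int k * (p + int k - 1)"
  proof -
    have "(\<Sum>b\<in>A. \<Sum>b'\<in>A. F b b') \<le> (\<Sum>b\<in>A. p + (int k - 1))"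
      by (rule sum_mono) (rule row)
    thus ?thesis using S2 k_def by (simp add: algebra_simps)
  qed
  have lower: "X a \<ge> int k - 3" if a: "a \<in> A" for a
  proof -
    define E where "E = {b \<in> A - {a}. p dvd a*b+n}"
    have Esub: "E \<subseteq> A - {a}" unfolding E_def by auto
    have Ecard: "card E \<le> 1"
    proof -
      have "finite E" using Esub fin finite_subset by blast
      moreover have "\<forall>b1\<in>E. \<forall>b2\<in>E. b1 = b2"
      proof (intro ballI)
        fix b1 b2 assume b12: "b1 \<in> E" "b2 \<in> E"
        hence d1: "p dvd a*b1+n" and d2: "p dvd a*b2+n" unfolding E_def by auto
        have "p dvd (a*b1+n) - (a*b2+n)" using d1 d2 by (rule dvd_diff)
        moreover have "(a*b1+n) - (a*b2+n) = a*(b1-b2)" by (simp add: algebra_simps)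
        ultimately have "p dvd a*(b1-b2)" by simp
        moreover have "\<not> p dvd a"
        proof
          assume "p dvd a"
          hence "p dvd a*b1" by simp
          with d1 have "p dvd (a*b1+n) - a*b1" by (rule dvd_diff)
          thus False using n by simp
        qed
        ultimately have "p dvd b1 - b2" using p(1) by (simp add: prime_dvd_mult_iff)
        moreover have "b1 \<in> {0..<p}" "b2 \<in> {0..<p}" using b12 A unfolding E_def by auto
        ultimately show "b1 = b2" using range_dvd_eq by blast
      qed
      ultimately show ?thesis using card_le_Suc0_iff_eq by auto
    qed
    have fa: "finite (A - {a})" using fin by simp
    have "X a = Legendre (a*a+n) p + (\<Sum>b\<in>A - {a}. Legendre (a*b+n) p)"
      unfolding X_def using sum.remove[OF fin a] by simp
    also have "(\<Sum>b\<in>A - {a}. Legendre (a*b+n) p) = (\<Sum>b\<in>E. Legendre (a*b+n) p) + (\<Sum>b\<in>(A - {a}) - E. Legendre (a*b+n) p)"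
      using sum.subset_diff[OF Esub fa] by (simp add: add.commute)
    also have "(\<Sum>b\<in>E. Legendre (a*b+n) p) \<ge> 0"
    proof (rule sum_nonneg)
      fix b assume "b \<in> E" thus "0 \<le> Legendre (a*b+n) p" using QR[OF a] unfolding E_def by (auto intro: leg_QR)
    qed
    moreover have "(\<Sum>b\<in>(A - {a}) - E. Legendre (a*b+n) p) = (\<Sum>b\<in>(A - {a}) - E. 1)"
    proof (rule sum.cong[OF refl])
      fix b assume "b \<in> (A - {a}) - E"
      thus "Legendre (a*b+n) p = 1" using QR[OF a] unfolding E_def by (auto intro: leg_QR_nz)
    qed
    moreover have "(\<Sum>b\<in>(A - {a}) - E. (1::int)) = int (card (A - {a})) - int (card E)"
      using card_Diff_subset[OF finite_subset[OF Esub fa] Esub] card_mono[OF fa Esub] by simp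
    moreover have "int (card (A - {a})) = int k - 1"
    proof -
      have "card A > 0" using a fin by (simp add: card_gt_0_iff; blast)
      hence "k \<ge> 1" unfolding k_def by simp
      moreover have "card (A - {a}) = k - 1" unfolding k_def by (rule card_Diff_singleton[OF a])
      ultimately show ?thesis by simp
    qed
    moreover have "Legendre (a*a+n) p \<ge> -1" using leg_range[of "a*a+n" p] by auto
    ultimately show ?thesis using Ecard by linarith
  qed
  show ?thesis
  proof (cases "k \<ge> 3")
    case False
    hence "real k \<le> 5" by simp
    moreover have "sqrt (real_of_int p) \<ge> 0" using pgt0 by simp
    ultimately show ?thesis using k_def by linarith
  next
    case True
    have "(\<Sum>a\<in>A. (int k - 3)^2) \<le> (\<Sum>a\<in>A. (X a)^2)"
    proof (rule sum_mono)
      fix a assume "a \<in> A"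
      hence "int k - 3 \<le> X a" "0 \<le> int k - 3" using lower True by auto
      thus "(int k - 3)^2 \<le> (X a)^2" by (simp add: power_mono)
    qed
    also have "\<dots> \<le> (\<Sum>a\<in>{0..<p}. (X a)^2)"
      by (rule sum_mono2) (use A in auto)
    also have "\<dots> \<le> int k * (p + int k - 1)" by (rule upper)
    finally have "int k * (int k - 3)^2 \<le> int k * (p + int k - 1)" using k_def by simp
    hence ineq: "(int k - 3)^2 \<le> p + int k - 1" using True by simp
    define r where "r = real k"
    have ineqr: "(r - 3)^2 \<le> real_of_int p + r - 1"
    proof -
      have "real_of_int ((int k - 3)^2) \<le> real_of_int (p + int k - 1)" using ineq by linarith
      thus ?thesis unfolding r_def by simp
    qed
    show ?thesis
    proof (rule ccontr)
      assume "\<not> ?thesis"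
      hence gt: "r - 5 > sqrt (real_of_int p)" unfolding r_def k_def by simp
      have s0: "sqrt (real_of_int p) \<ge> 0" using pgt0 by simp
      have "(r - 5) * (r - 5) > sqrt (real_of_int p) * sqrt (real_of_int p)"
        using mult_strict_mono[OF gt gt] s0 gt by linarith
      moreover have "sqrt (real_of_int p) * sqrt (real_of_int p) = real_of_int p" using pgt0 by simp
      ultimately have "(r - 5) * (r - 5) > real_of_int p" by simp
      moreover have "(r - 5) * (r - 2) \<ge> (r - 5) * (r - 5)" using gt s0 by (intro mult_left_mono) linarith+
      ultimately show False using ineqr by (simp add: power2_eq_square algebra_simps)
    qed
  qed
qed

end



lemma aux_alg:
  fixes s A B d :: real
  shows "(-1 * s) * (A + B) / d = (-1 * s) * B / d - s * A / d"
  by (cases "d = 0") (simp_all add: field_simps)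

lemma beta_sum:
  fixes x :: real
  assumes "x > 0"
  shows "(\<Sum>k\<le>m. (-1)^k * real (m choose k) / (x + real k)) = fact m / pochhammer x (Suc m)"
  using assms
proof (induction m arbitrary: x)
  case 0
  then show ?case by simp
next
  case (Suc m)
  define f where "f = (\<lambda>m x. (\<Sum>k\<le>m. (-1)^k * real (m choose k) / (x + real k)))"
  have x1: "x + 1 > 0" using Suc.prems by simp
  have "(\<Sum>k\<le>Suc m. (-1)^k * real (Suc m choose k) / (x + real k))
      = 1 / x + (\<Sum>j\<le>m. (-1)^(Suc j) * real (Suc m choose Suc j) / (x + real (Suc j)))"
    by (subst sum.atMost_Suc_shift) simp
  also have "\<dots> = 1 / x + (\<Sum>j\<le>m. (-1)^(Suc j) * real (m choose Suc j) / (x + real (Suc j)))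
                   - (\<Sum>j\<le>m. (-1)^j * real (m choose j) / ((x + 1) + real j))"
  proof -
    have "(\<Sum>j\<le>m. (-1)^(Suc j) * real (Suc m choose Suc j) / (x + real (Suc j)))
       = (\<Sum>j\<le>m. (-1)^(Suc j) * real (m choose Suc j) / (x + real (Suc j)) - (-1)^j * real (m choose j) / ((x + 1) + real j))"
    proof (rule sum.cong[OF refl])
      fix j
      have e: "x + real (Suc j) = (x + 1) + real j" by simp
      show "(-1)^(Suc j) * real (Suc m choose Suc j) / (x + real (Suc j))
         = (-1)^(Suc j) * real (m choose Suc j) / (x + real (Suc j)) - (-1)^j * real (m choose j) / ((x + 1) + real j)"
        unfolding e binomial_Suc_Suc of_nat_add power_Suc by (rule aux_alg)
    qed
    thus ?thesis by (simp add: sum_subtractf)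
  qed
  also have "1 / x + (\<Sum>j\<le>m. (-1)^(Suc j) * real (m choose Suc j) / (x + real (Suc j))) = f m x"
  proof -
    have "f m x = (\<Sum>k\<le>Suc m. (-1)^k * real (m choose k) / (x + real k))"
      unfolding f_def by simp
    also have "\<dots> = 1 / x + (\<Sum>j\<le>m. (-1)^(Suc j) * real (m choose Suc j) / (x + real (Suc j)))"
      by (subst sum.atMost_Suc_shift) simp
    finally show ?thesis by simp
  qed
  also have "f m x = fact m / pochhammer x (Suc m)" unfolding f_def by (rule Suc.IH[OF Suc.prems])
  also have "(\<Sum>j\<le>m. (-1)^j * real (m choose j) / ((x + 1) + real j)) = fact m / pochhammer (x+1) (Suc m)"
    by (rule Suc.IH[OF x1])
  also have "fact m / pochhammer x (Suc m) - fact m / pochhammer (x+1) (Suc m) = fact (Suc m) / pochhammer x (Suc (Suc m))"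
  proof -
    have p1: "pochhammer x (Suc (Suc m)) = x * pochhammer (x+1) (Suc m)" by (rule pochhammer_rec)
    have p2: "pochhammer x (Suc (Suc m)) = pochhammer x (Suc m) * (x + real (Suc m))" by (rule pochhammer_Suc)
    have a: "pochhammer x (Suc m) > 0" using Suc.prems by (intro pochhammer_pos)
    have b: "pochhammer (x+1) (Suc m) > 0" using x1 by (intro pochhammer_pos)
    have "fact m / pochhammer x (Suc m) = fact m * (x + real (Suc m)) / pochhammer x (Suc (Suc m))"
    proof -
      have c: "x + real (Suc m) \<noteq> 0" using Suc.prems by simp
      show ?thesis unfolding p2 using c by simp
    qed
    moreover have "fact m / pochhammer (x+1) (Suc m) = fact m * x / pochhammer x (Suc (Suc m))"
    proof -
      have c: "x \<noteq> 0" using Suc.prems by simp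
      show ?thesis unfolding p1 using c by (simp add: mult.commute)
    qed
    ultimately show ?thesis by (simp add: diff_divide_distrib[symmetric] algebra_simps)
  qed
  finally show ?case .
qed


lemma common_multiple:
  fixes Q :: nat
  assumes Q: "Q \<ge> 1"
  shows "\<exists>D. D > 0 \<and> (\<forall>i\<in>{1..Q}. i dvd D) \<and> D \<le> Q ^ card {p. prime p \<and> p \<le> Q}"
proof -
  define Pr where "Pr = {p. prime p \<and> p \<le> Q}"
  have finPr: "finite Pr" unfolding Pr_def by (rule finite_subset[of _ "{..Q}"]) auto
  define e where "e = (\<lambda>p. Max ((\<lambda>i. multiplicity p i) ` {1..Q}))"
  define D where "D = (\<Prod>p\<in>Pr. p ^ e p)"
  have primes: "\<And>p. p \<in> Pr \<Longrightarrow> prime p" unfolding Pr_def by auto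
  have Dpos: "D > 0" unfolding D_def using primes prime_gt_0_nat
    by (intro prod_pos) auto
  have dv: "i dvd D" if i: "i \<in> {1..Q}" for i
  proof (rule multiplicity_le_imp_dvd)
    show "i \<noteq> 0" using i by auto
    fix q :: nat assume q: "prime q"
    show "multiplicity q i \<le> multiplicity q D"
    proof (cases "q \<in> Pr")
      case True
      have "multiplicity q D = e q" unfolding D_def
        using multiplicity_prod_prime_powers[OF finPr primes q] True by simp
      moreover have "multiplicity q i \<le> e q" unfolding e_def
        by (rule Max_ge) (use i in auto)
      ultimately show ?thesis by simp
    next
      case False
      hence "q > Q" using q unfolding Pr_def by auto
      hence "\<not> q dvd i" using i by (auto dest: dvd_imp_le)
      hence "multiplicity q i = 0" by (rule not_dvd_imp_multiplicity_0)
      thus ?thesis by simp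
    qed
  qed
  have "D \<le> (\<Prod>p\<in>Pr. Q)" unfolding D_def
  proof (rule prod_mono)
    fix p assume p: "p \<in> Pr"
    have "e p \<in> (\<lambda>i. multiplicity p i) ` {1..Q}" unfolding e_def
      by (rule Max_in) (use Q in auto)
    then obtain i where i: "i \<in> {1..Q}" "e p = multiplicity p i" by auto
    have "p ^ e p dvd i" unfolding i(2) by (rule multiplicity_dvd)
    hence "p ^ e p \<le> i" using i(1) by (intro dvd_imp_le) auto
    thus "0 \<le> p ^ e p \<and> p ^ e p \<le> Q" using i(1) by auto
  qed
  also have "\<dots> = Q ^ card Pr" by simp
  finally show ?thesis using Dpos dv unfolding Pr_def by blast
qed

lemma pi_lower:
  fixes m :: nat
  assumes m: "m \<ge> 1"
  shows "(4::real) ^ m \<le> real (2*m+1) ^ card {p. prime p \<and> p \<le> 2*m+1}"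
proof -
  define Q where "Q = 2*m+1"
  obtain D where D: "D > 0" "\<forall>i\<in>{1..Q}. i dvd D" "D \<le> Q ^ card {p. prime p \<and> p \<le> Q}"
    using common_multiple[of Q] unfolding Q_def by auto
  define x where "x = real (m+1)"
  have x0: "x > 0" unfolding x_def by simp
  define I where "I = (\<Sum>k\<le>m. (-1)^k * int (m choose k) * int (D div (m+1+k)))"
  have "real_of_int I = (\<Sum>k\<le>m. (-1)^k * real (m choose k) * (real D / (x + real k)))"
    unfolding I_def of_int_sum
  proof (rule sum.cong[OF refl])
    fix k assume k: "k \<in> {..m}"
    have "(m+1+k) dvd D" using D(2) k unfolding Q_def by auto
    hence "real (D div (m+1+k)) = real D / real (m+1+k)" by (rule real_of_nat_div)
    thus "real_of_int ((-1)^k * int (m choose k) * int (D div (m+1+k))) = (-1)^k * real (m choose k) * (real D / (x + real k))"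
      unfolding x_def by simp
  qed
  also have "\<dots> = real D * (\<Sum>k\<le>m. (-1)^k * real (m choose k) / (x + real k))"
    by (simp add: sum_distrib_left algebra_simps)
  also have "\<dots> = real D * (fact m / pochhammer x (Suc m))" using beta_sum[OF x0] by simp
  finally have Ieq: "real_of_int I = real D * (fact m / pochhammer x (Suc m))" .
  have ppos: "pochhammer x (Suc m) > 0" using x0 by (intro pochhammer_pos)
  have "real_of_int I > 0" unfolding Ieq using D(1) ppos by (simp add: fact_gt_zero)
  hence "I \<ge> 1" by simp
  hence ge1: "real D * (fact m / pochhammer x (Suc m)) \<ge> 1" using Ieq by simp
  have poch: "(fact (2*m+1) :: real) = fact m * pochhammer x (Suc m)"
  proof -
    have "(fact (m + Suc m) :: real) = pochhammer 1 (m + Suc m)" by (rule pochhammer_fact)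
    also have "\<dots> = pochhammer 1 m * pochhammer (1 + real m) (Suc m)" by (rule pochhammer_product')
    also have "\<dots> = fact m * pochhammer x (Suc m)" by (simp add: pochhammer_fact x_def add.commute)
    finally have c: "(fact (m + Suc m) :: real) = fact m * pochhammer x (Suc m)" .
    have eq: "2*m+1 = m + Suc m" by simp
    show ?thesis unfolding eq by (rule c)
  qed
  have e1: "pochhammer x (Suc m) / fact m \<le> real D"
    using ge1 ppos by (simp add: field_simps)
  have e2: "pochhammer x (Suc m) / fact m = real (2*m+1) * real ((2*m) choose m)"
  proof -
    have "real ((2*m) choose m) = fact (2*m) / (fact m * fact (2*m - m))" by (rule binomial_fact) simp
    hence b: "real ((2*m) choose m) = fact (2*m) / (fact m * fact m)" by simp
    have f: "(fact (2*m+1) :: real) = real (2*m+1) * fact (2*m)" by simp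
    have "pochhammer x (Suc m) = fact (2*m+1) / fact m" unfolding poch by simp
    hence "pochhammer x (Suc m) / fact m = real (2*m+1) * fact (2*m) / fact m / fact m" unfolding f by simp
    also have "\<dots> = real (2*m+1) * (fact (2*m) / (fact m * fact m))" by (simp add: divide_divide_eq_left)
    finally show ?thesis unfolding b .
  qed
  have e3: "real (2*m+1) * (4^m / (2 * real m)) \<le> real (2*m+1) * real ((2*m) choose m)"
    using central_binomial_lower_bound[of m] m by (intro mult_left_mono) auto
  have D4: "real D \<ge> real (2*m+1) * (4^m / (2 * real m))" using e1 e2 e3 by linarith
  have "(4::real)^m \<le> real (2*m+1) * (4^m / (2 * real m))"
  proof -
    have "(4::real)^m * (2 * real m) \<le> real (2*m+1) * 4^m" by simp
    thus ?thesis using m by (simp add: field_simps)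
  qed
  also have "\<dots> \<le> real D" by (rule D4)
  also have "\<dots> \<le> real (Q ^ card {p. prime p \<and> p \<le> Q})" using D(3) by linarith
  finally show ?thesis unfolding Q_def by simp
qed



lemma cs_sum:
  fixes z :: "'a \<Rightarrow> real"
  assumes "finite I"
  shows "(\<Sum>r\<in>I. z r)^2 \<le> real (card I) * (\<Sum>r\<in>I. (z r)^2)"
proof -
  have "0 \<le> (\<Sum>r\<in>I. \<Sum>s\<in>I. (z r - z s)^2)" by (intro sum_nonneg) auto
  also have "(\<Sum>r\<in>I. \<Sum>s\<in>I. (z r - z s)^2)
      = (\<Sum>r\<in>I. \<Sum>s\<in>I. (z r)^2) + (\<Sum>r\<in>I. \<Sum>s\<in>I. (z s)^2) - 2 * (\<Sum>r\<in>I. \<Sum>s\<in>I. z r * z s)"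
    by (simp add: power2_diff sum.distrib sum_subtractf sum_distrib_left algebra_simps)
  also have "(\<Sum>r\<in>I. \<Sum>s\<in>I. (z r)^2) = real (card I) * (\<Sum>r\<in>I. (z r)^2)"
    by (simp add: sum_distrib_left mult.commute)
  also have "(\<Sum>r\<in>I. \<Sum>s\<in>I. (z s)^2) = real (card I) * (\<Sum>r\<in>I. (z r)^2)"
    by simp
  also have "(\<Sum>r\<in>I. \<Sum>s\<in>I. z r * z s) = (\<Sum>r\<in>I. z r)^2"
    by (simp add: power2_eq_square sum_product)
  finally show ?thesis by simp
qed

lemma fiber_sq:
  fixes A :: "int set" and p :: int
  assumes finA: "finite A"
  shows "real (card A)^2 \<le> real (card ((\<lambda>x. x mod p) ` A)) *
           (\<Sum>x\<in>A. \<Sum>y\<in>A. if x mod p = y mod p then 1 else 0 :: real)"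
proof -
  define g where "g = (\<lambda>x::int. x mod p)"
  define I where "I = g ` A"
  define Z where "Z = (\<lambda>r. real (card {x\<in>A. g x = r}))"
  have finI: "finite I" unfolding I_def using finA by simp
  have inner: "(\<Sum>y\<in>A. if g x = g y then 1 else 0 :: real) = Z (g x)" for x
  proof -
    have "(\<Sum>y\<in>A. if g x = g y then 1 else 0 :: real) = (\<Sum>y\<in>{y\<in>A. g y = g x}. 1)"
      using sum.inter_filter[OF finA, of "\<lambda>_. 1::real" "\<lambda>y. g y = g x"] by (simp add: eq_commute)
    thus ?thesis unfolding Z_def by simp
  qed
  have regroup: "(\<Sum>x\<in>A. h (g x)) = (\<Sum>r\<in>I. Z r * h r)" for h :: "int \<Rightarrow> real"
  proof -
    have "(\<Sum>x\<in>A. h (g x)) = (\<Sum>r\<in>I. \<Sum>x\<in>{x\<in>A. g x = r}. h (g x))"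
      unfolding I_def by (rule sum.image_gen[OF finA])
    also have "\<dots> = (\<Sum>r\<in>I. Z r * h r)"
    proof (rule sum.cong[OF refl])
      fix r show "(\<Sum>x\<in>{x\<in>A. g x = r}. h (g x)) = Z r * h r"
        unfolding Z_def by simp
    qed
    finally show ?thesis .
  qed
  have tot: "(\<Sum>x\<in>A. \<Sum>y\<in>A. if x mod p = y mod p then 1 else 0 :: real) = (\<Sum>r\<in>I. (Z r)^2)"
  proof -
    have "(\<Sum>x\<in>A. \<Sum>y\<in>A. if x mod p = y mod p then 1 else 0 :: real) = (\<Sum>x\<in>A. Z (g x))"
      using inner unfolding g_def by simp
    also have "\<dots> = (\<Sum>r\<in>I. Z r * Z r)" by (rule regroup)
    finally show ?thesis by (simp add: power2_eq_square)
  qed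
  have k: "real (card A) = (\<Sum>r\<in>I. Z r)"
    using regroup[of "\<lambda>_. 1"] by simp
  show ?thesis
    unfolding tot k using cs_sum[OF finI, of Z] unfolding I_def g_def by simp
qed

lemma prod_primes_dvd:
  fixes Qs :: "int set" and d :: int
  assumes "finite Qs" "\<And>q. q \<in> Qs \<Longrightarrow> prime q \<and> q dvd d"
  shows "(\<Prod>q\<in>Qs. q) dvd d"
  using assms
proof (induction Qs rule: finite_induct)
  case empty
  then show ?case by simp
next
  case (insert q F)
  have cop: "coprime q (\<Prod>q\<in>F. q)"
  proof (rule prod_coprime_right)
    fix i assume "i \<in> F"
    hence "prime i" "i \<noteq> q" using insert by auto
    moreover have "prime q" using insert by auto
    ultimately show "coprime q i" using primes_coprime by blast
  qed
  have "(\<Prod>q\<in>F. q) dvd d" using insert by auto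
  moreover have "q dvd d" using insert by auto
  ultimately show ?case using insert(1,2) cop by (simp add: divides_mult)
qed

lemma count_primes_dvd:
  fixes P :: "int set" and d :: int and R :: real
  assumes finP: "finite P" and PR: "\<And>p. p \<in> P \<Longrightarrow> prime p \<and> real_of_int p > R"
    and R: "R > 1" and d: "d \<noteq> 0"
  shows "real (card {p\<in>P. p dvd d}) * ln R \<le> ln \<bar>d\<bar>"
proof -
  define Qs where "Qs = {p\<in>P. p dvd d}"
  have finQ: "finite Qs" unfolding Qs_def using finP by simp
  have dv: "(\<Prod>q\<in>Qs. q) dvd d" using prod_primes_dvd[OF finQ] PR unfolding Qs_def by auto
  have pos: "(\<Prod>q\<in>Qs. q) > 0" using PR unfolding Qs_def
    by (intro prod_pos) (auto dest: prime_gt_0_int)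
  have le: "(\<Prod>q\<in>Qs. q) \<le> \<bar>d\<bar>" using dvd_imp_le_int[OF d dv] pos by simp
  have "R ^ card Qs = (\<Prod>q\<in>Qs. R)" by simp
  also have "\<dots> \<le> (\<Prod>q\<in>Qs. real_of_int q)"
  proof (rule prod_mono)
    fix q assume "q \<in> Qs"
    hence "R < real_of_int q" using PR unfolding Qs_def by auto
    thus "0 \<le> R \<and> R \<le> real_of_int q" using R by linarith
  qed
  also have "\<dots> = real_of_int (\<Prod>q\<in>Qs. q)" by simp
  also have "\<dots> \<le> real_of_int \<bar>d\<bar>" using le by linarith
  finally have "R ^ card Qs \<le> real_of_int \<bar>d\<bar>" .
  hence "ln (R ^ card Qs) \<le> ln (real_of_int \<bar>d\<bar>)" using R by (intro ln_mono) auto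
  thus ?thesis using R unfolding Qs_def by (simp add: ln_realpow)
qed

lemma larger_sieve:
  fixes A P :: "int set" and V B :: real
  assumes finA: "finite A" and finP: "finite P" and Pne: "P \<noteq> {}"
    and nu: "\<And>p. p \<in> P \<Longrightarrow> real (card ((\<lambda>x. x mod p) ` A)) \<le> V"
    and cnt: "\<And>x y. x \<in> A \<Longrightarrow> y \<in> A \<Longrightarrow> x \<noteq> y \<Longrightarrow> real (card {p\<in>P. p dvd x - y}) \<le> B"
    and big: "real (card P) \<ge> 2 * V * B" and V: "V > 0" and B: "B \<ge> 0"
  shows "real (card A) \<le> 2 * V"
proof -
  define k where "k = real (card A)"
  define c where "c = real (card P)"
  have c0: "c > 0" unfolding c_def using finP Pne by (simp add: card_gt_0_iff)
  define ind where "ind = (\<lambda>p x y::int. if x mod p = y mod p then 1 else 0 :: real)"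
  have each: "k^2 \<le> V * (\<Sum>x\<in>A. \<Sum>y\<in>A. ind p x y)" if p: "p \<in> P" for p
  proof -
    have s0: "0 \<le> (\<Sum>x\<in>A. \<Sum>y\<in>A. ind p x y)" unfolding ind_def by (intro sum_nonneg) auto
    have "k^2 \<le> real (card ((\<lambda>x. x mod p) ` A)) * (\<Sum>x\<in>A. \<Sum>y\<in>A. ind p x y)"
      unfolding k_def ind_def by (rule fiber_sq[OF finA])
    also have "\<dots> \<le> V * (\<Sum>x\<in>A. \<Sum>y\<in>A. ind p x y)"
      by (rule mult_right_mono[OF nu[OF p] s0])
    finally show ?thesis .
  qed
  have "c * k^2 = (\<Sum>p\<in>P. k^2)" unfolding c_def by simp
  also have "\<dots> \<le> (\<Sum>p\<in>P. V * (\<Sum>x\<in>A. \<Sum>y\<in>A. ind p x y))"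
    by (rule sum_mono) (rule each)
  also have "\<dots> = V * (\<Sum>x\<in>A. \<Sum>y\<in>A. \<Sum>p\<in>P. ind p x y)"
  proof -
    have "(\<Sum>p\<in>P. \<Sum>x\<in>A. \<Sum>y\<in>A. ind p x y) = (\<Sum>x\<in>A. \<Sum>p\<in>P. \<Sum>y\<in>A. ind p x y)"
      by (rule sum.swap)
    also have "\<dots> = (\<Sum>x\<in>A. \<Sum>y\<in>A. \<Sum>p\<in>P. ind p x y)"
      by (rule sum.cong[OF refl], rule sum.swap)
    finally show ?thesis by (simp add: sum_distrib_left[symmetric])
  qed
  also have "(\<Sum>x\<in>A. \<Sum>y\<in>A. \<Sum>p\<in>P. ind p x y) \<le> (\<Sum>x\<in>A. c + (k - 1) * B)"
  proof (rule sum_mono)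
    fix x assume x: "x \<in> A"
    have cardP: "(\<Sum>p\<in>P. ind p x y) = real (card {p\<in>P. p dvd x - y})" for y
    proof -
      have "(\<Sum>p\<in>P. ind p x y) = (\<Sum>p\<in>{p\<in>P. p dvd x - y}. 1)"
        using sum.inter_filter[OF finP, of "\<lambda>_. 1::real" "\<lambda>p. p dvd x - y"]
        unfolding ind_def by (simp add: mod_eq_dvd_iff)
      thus ?thesis by simp
    qed
    have "(\<Sum>y\<in>A. \<Sum>p\<in>P. ind p x y) = (\<Sum>p\<in>P. ind p x x) + (\<Sum>y\<in>A - {x}. \<Sum>p\<in>P. ind p x y)"
      using sum.remove[OF finA x] by simp
    also have "(\<Sum>p\<in>P. ind p x x) = c" unfolding ind_def c_def by simp
    also have "(\<Sum>y\<in>A - {x}. \<Sum>p\<in>P. ind p x y) \<le> (\<Sum>y\<in>A - {x}. B)"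
    proof (rule sum_mono)
      fix y assume y: "y \<in> A - {x}"
      hence "x \<noteq> y" "y \<in> A" by auto
      from cnt[OF x this(2) this(1)] show "(\<Sum>p\<in>P. ind p x y) \<le> B" unfolding cardP .
    qed
    also have "(\<Sum>y\<in>A - {x}. B) = (k - 1) * B"
    proof -
      have "card A > 0" using x finA card_gt_0_iff by blast
      hence "card A \<ge> 1" by simp
      thus ?thesis unfolding k_def using x finA by (simp add: card_Diff_singleton of_nat_diff)
    qed
    finally show "(\<Sum>y\<in>A. \<Sum>p\<in>P. ind p x y) \<le> c + (k - 1) * B" by simp
  qed
  also have "(\<Sum>x\<in>A. c + (k - 1) * B) = k * (c + (k - 1) * B)" unfolding k_def by simp
  finally have main: "c * k^2 \<le> V * (k * (c + (k - 1) * B))" using V by (simp add: mult_left_mono)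
  show ?thesis
  proof (cases "k = 0")
    case True thus ?thesis using V k_def by simp
  next
    case False
    hence kpos: "k > 0" unfolding k_def by simp
    have "c * k^2 \<le> V * (k * (c + k * B))"
    proof -
      have "(k - 1) * B \<le> k * B" using B by (simp add: algebra_simps)
      hence "k * (c + (k - 1) * B) \<le> k * (c + k * B)" using mult_left_mono[of "c + (k - 1) * B" "c + k * B" k] kpos by simp
      hence "V * (k * (c + (k - 1) * B)) \<le> V * (k * (c + k * B))" using V by (simp add: mult_left_mono)
      thus ?thesis using main by linarith
    qed
    hence "k * (c * k) \<le> k * (V * c + V * k * B)" by (simp add: power2_eq_square algebra_simps)
    hence h1: "c * k \<le> V * c + V * k * B" using kpos by simp
    have "V * B \<le> c / 2" using big unfolding c_def by simp
    hence "k * (V * B) \<le> k * (c / 2)" using kpos by (simp add: mult_left_mono)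
    hence "V * k * B \<le> k * c / 2" by (simp add: algebra_simps)
    hence "c * k \<le> V * c + c * k / 2" using h1 by (simp add: mult.commute)
    hence "c * k / 2 \<le> V * c" by linarith
    hence "c * k \<le> c * (2 * V)" by (simp add: algebra_simps)
    thus ?thesis using c0 unfolding k_def by simp
  qed
qed



lemma ln2_ge_half: "ln (2::real) \<ge> 1/2"
proof -
  have "ln (1/2::real) \<le> 1/2 - 1" by (rule ln_le_minus_one) simp
  thus ?thesis by (simp add: ln_div)
qed

lemma ln_le_16: assumes "x > 0" shows "ln (x::real) \<le> x / 16 + 3"
proof -
  have "ln (x / 16) \<le> x / 16 - 1" using assms by (intro ln_le_minus_one) simp
  moreover have "ln (x / 16) = ln x - ln 16" using assms by (simp add: ln_div)
  moreover have "ln (16::real) = 4 * ln 2"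
  proof -
    have "ln ((2::real) ^ 4) = real 4 * ln 2" by (rule ln_realpow) 
    thus ?thesis by simp
  qed
  moreover have "ln (2::real) < 1" by (rule ln_2_less_1)
  ultimately show ?thesis by linarith
qed

lemma numerics:
  fixes l R pc m L :: real
  assumes l: "l \<ge> 4" and R1: "R \<ge> 40 * l" and R2: "R * R \<le> (40 * l)^2 + 3"
    and L: "L = ln R" and pc: "pc * (2 * L) \<ge> m * ln 4" and m: "2 * m \<ge> (40 * l)^2"
  shows "pc - R - l / L \<ge> 2 * (R + 5) * (2 * l / L)"
proof -
  have Rpos: "R > 1" using R1 l by linarith
  have Lpos: "L > 0" using L Rpos by simp
  have ln4: "ln (4::real) = 2 * ln 2"
  proof -
    have "ln ((2::real) ^ 2) = real 2 * ln 2" by (rule ln_realpow) 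
    thus ?thesis by simp
  qed
  have m0: "m \<ge> 0" using m by (smt (verit) zero_le_power2)
  have "m * ln 4 \<ge> m * 1" using m0 ln4 ln2_ge_half by (intro mult_left_mono) auto
  hence pcL: "pc * L \<ge> 400 * (l * l)" using pc m by (simp add: power2_eq_square algebra_simps)
  have RL: "R * L \<le> R * (R / 16 + 3)" using ln_le_16[of R] Rpos L by (intro mult_left_mono) auto
  have R3: "R \<le> 40 * l + 1"
  proof (rule ccontr)
    assume "\<not> ?thesis"
    hence "R > 40 * l + 1" by simp
    hence "R * R > (40 * l + 1) * (40 * l + 1)" using l by (intro mult_strict_mono) auto
    thus False using R2 l by (simp add: power2_eq_square algebra_simps)
  qed
  have lR: "l * R \<le> 40 * (l * l) + l"
  proof -
    have "l * R \<le> l * (40 * l + 1)" using R3 l by (intro mult_left_mono) auto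
    thus ?thesis by (simp add: algebra_simps)
  qed
  have RLb: "R * L \<le> 100 * (l * l) + 3 / 16 + 120 * l + 3"
  proof -
    have "R * L \<le> R * (R / 16 + 3)" by (rule RL)
    also have "\<dots> = R * R / 16 + 3 * R" by (simp add: algebra_simps)
    also have "\<dots> \<le> ((40 * l)^2 + 3) / 16 + 3 * (40 * l + 1)"
      using R2 R3 by (intro add_mono divide_right_mono) auto
    also have "(40 * l)^2 = 1600 * (l * l)" by (simp add: power2_eq_square)
    also have "(1600 * (l * l) + 3) / 16 + 3 * (40 * l + 1) = 100 * (l * l) + 3 / 16 + 120 * l + 3"
      by (simp add: add_divide_distrib)
    finally show ?thesis .
  qed
  have ll: "l * l \<ge> 4 * l" using l by (intro mult_right_mono) auto
  have key0: "pc * L - R * L - l \<ge> 4 * (l * R) + 20 * l"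
    using RLb pcL lR ll l by linarith
  have key: "pc * L - R * L - l \<ge> 4 * l * (R + 5)"
    using key0 by (simp add: algebra_simps)
  have "2 * (R + 5) * (2 * l / L) = 4 * l * (R + 5) / L" by simp
  also have "\<dots> \<le> (pc * L - R * L - l) / L" using key Lpos by (intro divide_right_mono) auto
  also have "\<dots> = pc - R - l / L" using Lpos by (simp add: field_simps)
  finally show ?thesis .
qed


lemma card_bound:
  fixes n :: int and S :: "int set"
  assumes n: "\<bar>n\<bar> \<ge> 400" and D: "has_property_D n S"
  shows "real (card (S \<inter> {1..n\<^sup>2})) \<le> 80 * ln \<bar>n\<bar> + 12"
proof -
  define l where "l = ln (real_of_int \<bar>n\<bar>)"
  have n0: "n \<noteq> 0" using n by auto
  have l4: "l \<ge> 4"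
  proof -
    have "ln ((2::real) ^ 8) = real 8 * ln 2" by (rule ln_realpow)
    hence "ln (256::real) = 8 * ln 2" by simp
    moreover have "ln (256::real) \<le> ln (real_of_int \<bar>n\<bar>)" using n by (subst ln_le_cancel_iff) auto
    ultimately show ?thesis using ln2_ge_half unfolding l_def by linarith
  qed
  define x where "x = (40*l)^2 / 2"
  have x0: "x \<ge> 0" unfolding x_def by simp
  define m :: nat where "m = nat \<lceil>x\<rceil>"
  define Q :: nat where "Q = 2*m+1"
  have c0: "\<lceil>x\<rceil> \<ge> 0" using x0 by simp
  have rm: "real m = real_of_int \<lceil>x\<rceil>" unfolding m_def using c0 by simp
  have m1: "2 * real m \<ge> (40*l)^2" using le_of_int_ceiling[of x] rm unfolding x_def by linarith
  have m2: "2 * real m \<le> (40*l)^2 + 2" using of_int_ceiling_le_add_one[of x] rm unfolding x_def by linarith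
  have mge1: "m \<ge> 1"
  proof -
    have "(40*l)^2 \<ge> 1" using l4 by (smt (verit) one_le_power)
    hence "real m > 0" using m1 by linarith
    thus ?thesis by simp
  qed
  define R where "R = sqrt (real Q)"
  have RR: "R * R = real Q" unfolding R_def by simp
  have R0: "R \<ge> 0" unfolding R_def by simp
  have RQ: "real Q = 2 * real m + 1" unfolding Q_def by simp
  have R1: "R \<ge> 40 * l"
  proof -
    have "sqrt ((40*l)^2) \<le> sqrt (real Q)" using m1 RQ by (intro real_sqrt_le_mono) linarith
    moreover have "sqrt ((40*l)^2) = \<bar>40*l\<bar>" by (rule real_sqrt_abs)
    ultimately show ?thesis using l4 unfolding R_def by linarith
  qed
  have R2: "R * R \<le> (40*l)^2 + 3" using RR RQ m2 by linarith
  have R3: "R \<le> 40 * l + 1"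
  proof -
    have "(40*l)^2 + 3 \<le> (40*l+1)^2" using l4 by (simp add: power2_eq_square algebra_simps)
    hence "real Q \<le> (40*l+1)^2" using RR R2 by linarith
    hence "sqrt (real Q) \<le> sqrt ((40*l+1)^2)" by (rule real_sqrt_le_mono)
    moreover have "sqrt ((40*l+1)^2) = \<bar>40*l+1\<bar>" by (rule real_sqrt_abs)
    ultimately show ?thesis using l4 unfolding R_def by linarith
  qed
  have Rgt: "R > 2" using R1 l4 by linarith
  define L where "L = ln R"
  have Lpos: "L > 0" unfolding L_def using Rgt by simp
  have lnQ: "ln (real Q) = 2 * L"
  proof -
    have "ln (R * R) = ln R + ln R" using Rgt by (simp add: ln_mult)
    thus ?thesis unfolding L_def RR by simp
  qed
  define A where "A = S \<inter> {1..n\<^sup>2}"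
  have finA: "finite A" unfolding A_def by simp
  define P where "P = {p::int. prime p \<and> R < real_of_int p \<and> p \<le> int Q \<and> \<not> p dvd n}"
  have finP: "finite P" unfolding P_def by (rule finite_subset[of _ "{0..int Q}"]) (auto dest: prime_ge_0_int)
  have PR: "prime p \<and> R < real_of_int p" if "p \<in> P" for p using that unfolding P_def by auto
  define V where "V = R + 5"
  define B where "B = 2 * l / L"
  have V0: "V > 0" unfolding V_def using R0 by simp
  have B0: "B > 0" unfolding B_def using Lpos l4 by simp
  define Pall where "Pall = {p::int. prime p \<and> p \<le> int Q}"
  have Pall_eq: "Pall = int ` {p. prime p \<and> p \<le> Q}"
  proof
    show "Pall \<subseteq> int ` {p. prime p \<and> p \<le> Q}"
    proof
      fix p assume p: "p \<in> Pall"
      hence p0: "p \<ge> 0" unfolding Pall_def using prime_ge_0_int by auto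
      hence "p = int (nat p)" by simp
      moreover have "prime (nat p)" using p p0 unfolding Pall_def
        using prime_int_nat_transfer[of "nat p"] by simp
      moreover have "nat p \<le> Q" using p unfolding Pall_def by auto
      ultimately show "p \<in> int ` {p. prime p \<and> p \<le> Q}" by blast
    qed
    show "int ` {p. prime p \<and> p \<le> Q} \<subseteq> Pall"
    proof
      fix p assume "p \<in> int ` {p. prime p \<and> p \<le> Q}"
      then obtain q where q: "p = int q" "prime q" "q \<le> Q" by auto
      have "prime (int q)" using q(2) prime_int_nat_transfer[of q] by simp
      thus "p \<in> Pall" using q unfolding Pall_def by simp
    qed
  qed
  define pc where "pc = real (card {p. prime p \<and> p \<le> Q})"
  have cardPall: "real (card Pall) = pc" unfolding Pall_eq pc_def by (simp add: card_image)
  have pcbound: "pc * (2 * L) \<ge> real m * ln 4"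
  proof -
    have "(4::real) ^ m \<le> real Q ^ card {p. prime p \<and> p \<le> Q}"
      using pi_lower[OF mge1] unfolding Q_def by simp
    hence "ln ((4::real) ^ m) \<le> ln (real Q ^ card {p. prime p \<and> p \<le> Q})"
      by (subst ln_le_cancel_iff) auto
    hence "real m * ln 4 \<le> pc * ln (real Q)" unfolding pc_def by (simp add: ln_realpow)
    thus ?thesis using lnQ by simp
  qed
  have num: "pc - R - l / L \<ge> 2 * (R + 5) * (2 * l / L)"
    by (rule numerics[OF l4 R1 R2 L_def pcbound m1])
  define Small where "Small = {p\<in>Pall. real_of_int p \<le> R}"
  define Pbig where "Pbig = {p\<in>Pall. R < real_of_int p}"
  define Dv where "Dv = {p\<in>Pbig. p dvd n}"
  have finPall: "finite Pall" unfolding Pall_eq by simp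
  have sub: "Pall \<subseteq> P \<union> Small \<union> Dv" unfolding Pall_def P_def Small_def Dv_def Pbig_def by auto
  have "card Pall \<le> card (P \<union> Small \<union> Dv)"
    by (rule card_mono[OF _ sub]) (use finP finPall in \<open>auto simp: Small_def Dv_def Pbig_def\<close>)
  also have "\<dots> \<le> card P + card Small + card Dv"
    by (metis (no_types, lifting) add_le_mono1 card_Un_le order_trans)
  finally have cU: "real (card Pall) \<le> real (card P) + real (card Small) + real (card Dv)" by linarith
  have cSmall: "real (card Small) \<le> R"
  proof -
    have "Small \<subseteq> {1..\<lfloor>R\<rfloor>}"
    proof
      fix p assume "p \<in> Small"
      hence "prime p" "real_of_int p \<le> R" unfolding Small_def Pall_def by auto
      moreover from this(1) have "p \<ge> 2" by (rule prime_ge_2_int)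
      ultimately show "p \<in> {1..\<lfloor>R\<rfloor>}" by (simp add: le_floor_iff)
    qed
    hence "card Small \<le> card {1..\<lfloor>R\<rfloor>}" by (intro card_mono) auto
    also have "card {1..\<lfloor>R\<rfloor>} = nat \<lfloor>R\<rfloor>" by simp
    finally have "real (card Small) \<le> real (nat \<lfloor>R\<rfloor>)" by linarith
    also have "\<dots> \<le> R" using R0 by linarith
    finally show ?thesis .
  qed
  have cDv: "real (card Dv) \<le> l / L"
  proof -
    have finPbig: "finite Pbig" unfolding Pbig_def using finPall by simp
    have "real (card {p\<in>Pbig. p dvd n}) * ln R \<le> ln \<bar>real_of_int n\<bar>"
      using count_primes_dvd[OF finPbig _ _ n0, of R] Rgt unfolding Pbig_def Pall_def by auto
    hence "real (card Dv) * L \<le> l" unfolding Dv_def L_def l_def by simp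
    thus ?thesis using Lpos by (simp add: pos_le_divide_eq)
  qed
  have big: "real (card P) \<ge> 2 * V * B"
    using cU cSmall cDv cardPall num unfolding V_def B_def by linarith
  have Pne: "P \<noteq> {}"
  proof
    assume "P = {}"
    hence "real (card P) = 0" by simp
    moreover have "2 * V * B > 0" using V0 B0 by simp
    ultimately show False using big by linarith
  qed
  have nu: "real (card ((\<lambda>x. x mod p) ` A)) \<le> V" if pP: "p \<in> P" for p
  proof -
    have pr: "prime p" and pR: "R < real_of_int p" and pQ: "p \<le> int Q" and pn: "\<not> p dvd n"
      using pP unfolding P_def by auto
    have p2: "p > 2" using pR Rgt by linarith
    have pp: "p > 0" using p2 by simp
    have sub: "(\<lambda>x. x mod p) ` A \<subseteq> {0..<p}" using pp by auto
    have QR: "QuadRes p (a*b+n)" if ab: "a \<in> (\<lambda>x. x mod p) ` A" "b \<in> (\<lambda>x. x mod p) ` A" "a \<noteq> b" for a b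
    proof -
      obtain x y where xy: "x \<in> A" "y \<in> A" "a = x mod p" "b = y mod p" using ab(1,2) by auto
      hence "x \<noteq> y" using ab(3) by auto
      moreover have "x \<in> S" "y \<in> S" using xy unfolding A_def by auto
      ultimately obtain t where t: "x * y + n = t^2" using D unfolding has_property_D_def by blast
      have "(a*b+n) mod p = (x*y+n) mod p" unfolding xy(3,4)
        by (metis mod_add_left_eq mod_mult_eq)
      hence "[t^2 = a*b+n] (mod p)" unfolding cong_def using t by simp
      thus ?thesis unfolding QuadRes_def by blast
    qed
    have "real (card ((\<lambda>x. x mod p) ` A)) \<le> sqrt (real_of_int p) + 5"
      by (rule local_bound[OF pr p2 sub pn QR]) auto
    also have "sqrt (real_of_int p) \<le> R" unfolding R_def using pQ by (intro real_sqrt_le_mono) linarith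
    finally show ?thesis unfolding V_def by simp
  qed
  have cnt: "real (card {p\<in>P. p dvd x - y}) \<le> B" if xy: "x \<in> A" "y \<in> A" "x \<noteq> y" for x y
  proof -
    have d0: "x - y \<noteq> 0" using xy by simp
    have "real (card {p\<in>P. p dvd x - y}) * ln R \<le> ln \<bar>real_of_int (x - y)\<bar>"
      using count_primes_dvd[OF finP _ _ d0, of R] PR Rgt by auto
    also have "ln \<bar>real_of_int (x - y)\<bar> \<le> ln (real_of_int (n^2))"
    proof (subst ln_le_cancel_iff)
      show "0 < \<bar>real_of_int (x - y)\<bar>" using d0 by simp
      show "0 < real_of_int (n^2)" using n0 by simp
      have "x \<in> {1..n^2}" "y \<in> {1..n^2}" using xy unfolding A_def by auto
      hence "\<bar>x - y\<bar> \<le> n^2" by auto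
      thus "\<bar>real_of_int (x - y)\<bar> \<le> real_of_int (n^2)" by linarith
    qed
    also have "ln (real_of_int (n^2)) = 2 * l"
    proof -
      have "real_of_int (n^2) = (real_of_int \<bar>n\<bar>)^2" by simp
      moreover have "ln ((real_of_int \<bar>n\<bar>)^2) = real 2 * ln (real_of_int \<bar>n\<bar>)"
        using n0 by (intro ln_realpow)
      ultimately show ?thesis unfolding l_def by simp
    qed
    finally have "real (card {p\<in>P. p dvd x - y}) * L \<le> 2 * l" unfolding L_def .
    thus ?thesis unfolding B_def using Lpos by (simp add: pos_le_divide_eq)
  qed
  have "real (card A) \<le> 2 * V"
    by (rule larger_sieve[OF finA finP Pne nu cnt big V0]) (use B0 in auto)
  also have "2 * V \<le> 80 * l + 12" unfolding V_def using R3 by (simp add: algebra_simps)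
  finally show ?thesis unfolding A_def l_def by simp
qed



lemma final_arith:
  fixes l T b :: real assumes "265.55 * l \<le> T" "1 \<le> b" "4 \<le> l"
  shows "80 * l + 12 < T + 9.01 * b"
proof -
  have e1: "(265.55::real) = 5311/20" and e2: "(9.01::real) = 901/100" by simp_all
  show ?thesis using assms unfolding e1 e2 by linarith
qed

theorem theorem3:
  fixes n :: int
  assumes "\<bar>n\<bar> \<ge> 400"
  shows "real (C n) < 265.55 * ln \<bar>n\<bar> * (ln (ln \<bar>n\<bar>))\<^sup>2 + 9.01 * ln (ln \<bar>n\<bar>)"
proof -
  define l where "l = ln (real_of_int \<bar>n\<bar>)"
  have l4: "l \<ge> 4"
  proof -
    have "ln ((2::real) ^ 8) = real 8 * ln 2" by (rule ln_realpow)
    hence "ln (256::real) = 8 * ln 2" by simp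
    moreover have "ln (256::real) \<le> ln (real_of_int \<bar>n\<bar>)" using assms by (subst ln_le_cancel_iff) auto
    ultimately show ?thesis using ln2_ge_half unfolding l_def by linarith
  qed
  define K where "K = nat \<lfloor>80 * l + 12\<rfloor>"
  define X where "X = {card (S \<inter> {1..n\<^sup>2}) | S. has_property_D n S}"
  have bound: "x \<le> K" if xX: "x \<in> X" for x
  proof -
    obtain S where S: "x = card (S \<inter> {1..n\<^sup>2})" "has_property_D n S" using xX unfolding X_def by blast
    have "real x \<le> 80 * l + 12" using card_bound[OF assms S(2)] S(1) unfolding l_def by simp
    hence "real_of_int (int x) \<le> 80 * l + 12" by simp
    hence "int x \<le> \<lfloor>80 * l + 12\<rfloor>" using le_floor_iff by blast
    thus ?thesis unfolding K_def by simp
  qed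
  have ne: "X \<noteq> {}"
  proof -
    have "has_property_D n {}" unfolding has_property_D_def by simp
    thus ?thesis unfolding X_def by blast
  qed
  have bdd: "bdd_above X" using bound by (intro bdd_aboveI) blast
  have "C n \<le> K" unfolding C_def X_def[symmetric] using cSup_le_iff[OF ne bdd] bound by blast
  hence "real (C n) \<le> real K" by simp
  also have "real K \<le> 80 * l + 12" unfolding K_def using l4 by linarith
  finally have c: "real (C n) \<le> 80 * l + 12" .
  have ll: "ln l \<ge> 1"
  proof -
    have "ln ((2::real) ^ 2) = real 2 * ln 2" by (rule ln_realpow)
    hence "ln (4::real) = 2 * ln 2" by simp
    moreover have "ln (4::real) \<le> ln l" using l4 by (subst ln_le_cancel_iff) auto
    ultimately show ?thesis using ln2_ge_half by linarith
  qed
  have "(ln l)^2 \<ge> 1" using ll by (simp add: one_le_power)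
  hence "265.55 * l * (ln l)^2 \<ge> 265.55 * l * 1" using l4 by (intro mult_left_mono) auto
  hence "265.55 * l * (ln l)^2 + 9.01 * ln l > 80 * l + 12"
    using final_arith[of l "265.55 * l * (ln l)^2" "ln l"] ll l4 by linarith
  thus ?thesis using c unfolding l_def by simp
qed

end
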